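(* $$L_{\mathbb{R},2}(\ell_\infty^2)=\sup\left\{\left[2t^{4/3}+2\left(\sqrt{t(1-t)}\right)^{4/3}\right]^{3/4}: t\in[1/2,1]\right\}\approx 1.7700,$$ the supremum being attained at some $t_0\approx 0.9147$. In particular $L_{\mathbb{R},2}\ge 1.7700$.
   Context: All spaces are real. For an $m$-homogeneous polynomial $P$ on a Banach space, $\check P$ denotes its polar (the unique symmetric $m$-linear form with $\check P(x,\dots,x)=P(x)$). For vectors $x_1,\dots,x_N$ in a Banach space $X$, $\|(x_j)_{j=1}^N\|_{w,1}=\sup\{\sum_{j=1}^N|\varphi(x_j)|:\varphi\in X',\|\varphi\|\le1\}$. $L_{\mathbb{R},m}$ denotes the smallest constant $L$ such that for every real Banach space $X$, every continuous $m$-homogeneous polynomial $P:X\to\mathbb{R}$, every $N$ and all $x^{(k)}_j\in X$ ($1\le j\le N$, $1\le k\le m$), $$\Big(\sum_{j_1,\dots,j_m=1}^N|\check P(x^{(1)}_{j_1},\dots,x^{(m)}_{j_m})|^{\frac{2m}{m+1}}\Big)^{\frac{m+1}{2m}}\le L\|P\|\prod_{k=1}^m\|(x^{(k)}_j)_{j=1}^N\|_{w,1}.$$ $\ell_\infty^n$ is $\mathbb{R}^n$ with the sup norm; for a polynomial $P$ on $\ell_\infty^n$, $\|P\|=\sup\{|P(x)|:x\in[-1,1]^n\}$. For $P$ an $m$-homogeneous polynomial on $\ell_\infty^n$ put $\Phi_{m,n}(P)=\big(\sum_{i_1,\dots,i_m=1}^n|\check P(e_{i_1},\dots,e_{i_m})|^{\frac{2m}{m+1}}\big)^{\frac{m+1}{2m}}$,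 and $L_{\mathbb{R},m}(\ell_\infty^n)=\sup\{\Phi_{m,n}(P): P \text{ $m$-homogeneous on } \ell_\infty^n,\ \|P\|\le1\}$. One has $L_{\mathbb{R},m}\ge L_{\mathbb{R},m}(\ell_\infty^n)$ (take $x^{(k)}_j=e_j$). *)

theory Defs
  imports "HOL-Analysis.Analysis"
begin

text \<open>Points of the n-dimensional real space are modelled as functions nat => real;
  only the coordinates below n matter.\<close>

definition hom2_poly :: "nat \<Rightarrow> ((nat \<Rightarrow> real) \<Rightarrow> real) \<Rightarrow> bool" where
  "hom2_poly n P \<longleftrightarrow> (\<exists>c :: nat \<Rightarrow> nat \<Rightarrow> real.
      \<forall>x. P x = (\<Sum>i<n. \<Sum>j<n. c i j * x i * x j))"

definition polar2 :: "((nat \<Rightarrow> real) \<Rightarrow> real) \<Rightarrow> (nat \<Rightarrow> real) \<Rightarrow> (nat \<Rightarrow> real) \<Rightarrow> real" where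
  "polar2 P x y = (P (\<lambda>i. x i + y i) - P (\<lambda>i. x i - y i)) / 4"

definition poly_norm :: "nat \<Rightarrow> ((nat \<Rightarrow> real) \<Rightarrow> real) \<Rightarrow> real" where
  "poly_norm n P = Sup {\<bar>P x\<bar> | x. \<forall>i<n. \<bar>x i\<bar> \<le> 1}"

definition unitv :: "nat \<Rightarrow> nat \<Rightarrow> real" where
  "unitv i = (\<lambda>j. if j = i then 1 else 0)"

definition Phi2 :: "nat \<Rightarrow> ((nat \<Rightarrow> real) \<Rightarrow> real) \<Rightarrow> real" where
  "Phi2 n P = (\<Sum>i<n. \<Sum>j<n. \<bar>polar2 P (unitv i) (unitv j)\<bar> powr (4/3)) powr (3/4)"

definition L2_linf :: "nat \<Rightarrow> real" where
  "L2_linf n = Sup {Phi2 n P | P. hom2_poly n P \<and> poly_norm n P \<le> 1}"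

end

theory Submission imports Defs begin

definition gg :: "real \<Rightarrow> real" where
  "gg t = 2 * t powr (4/3) + 2 * (t*(1-t)) powr (2/3)"
definition hh :: "real \<Rightarrow> real" where
  "hh t = -16*t^3 + 20*t^2 - 6*t + 1"
definition DD :: "real \<Rightarrow> real" where
  "DD t = 2*((4/3) * t powr (1/3)) + 2*((2/3) * (t*(1-t)) powr (-1/3) * (1-2*t))"

lemma gg_deriv:
  assumes "0 < t" "t < 1"
  shows "(gg has_real_derivative DD t) (at t)"
proof -
  have q: "t*(1-t) > 0" using assms by simp
  have "((\<lambda>t. 2 * t powr (4/3) + 2 * (t*(1-t)) powr (2/3)) has_real_derivative
     2*((4/3) * t powr (4/3 - 1) * 1) + 2*((2/3) * (t*(1-t)) powr (2/3 - 1) * (1*(1-t) + t*(0-1)))) (at t)"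
    by (rule derivative_eq_intros refl | use assms q in simp)+
  then show ?thesis unfolding gg_def[abs_def] DD_def by (simp add: algebra_simps)
qed

lemma cube_powr: "0 \<le> x \<Longrightarrow> (x powr (1/3)) ^ 3 = (x::real)"
  by (cases "x = 0") (simp_all add: powr_power)

lemma DD_sign:
  assumes "0 < t" "t < 1"
  shows "hh t > 0 \<Longrightarrow> DD t > 0" and "hh t < 0 \<Longrightarrow> DD t < 0"
proof -
  define q where "q = t*(1-t)"
  have q: "q > 0" using assms by (simp add: q_def)
  define w where "w = (t*q) powr (1/3)"
  have w0: "w > 0" using q assms by (simp add: w_def)
  have w3: "w^3 = t*q" unfolding w_def using q assms by (simp add: cube_powr)
  have key: "DD t * q powr (1/3) = (4/3) * (2*w + 1 - 2*t)"
  proof -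
    have "q powr (-1/3) * q powr (1/3) = 1" using q by (simp add: powr_add[symmetric])
    moreover have "t powr (1/3) * q powr (1/3) = w" using q assms by (simp add: w_def powr_mult)
    moreover have "DD t * q powr (1/3) = (8/3)*(t powr (1/3) * q powr (1/3)) + (4/3)*(1-2*t)*(q powr (-1/3) * q powr (1/3))"
      unfolding DD_def q_def[symmetric] by (simp add: algebra_simps)
    ultimately show ?thesis by (simp add: field_simps)
  qed
  have qp: "q powr (1/3) > 0" using q by simp
  have hw: "hh t = (2*w)^3 - (2*t-1)^3" using w3 unfolding hh_def q_def
    by (simp add: power_mult_distrib) (simp add: power3_eq_cube power2_eq_square algebra_simps)
  show "DD t > 0" if "hh t > 0"
  proof -
    have "2*w + 1 - 2*t > 0"
    proof (cases "2*t - 1 \<le> 0")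
      case True then show ?thesis using w0 by simp
    next
      case False
      then have "(2*t-1)^3 < (2*w)^3" using that hw by simp
      then have "2*t-1 < 2*w" by (rule power_less_imp_less_base) (use w0 in simp)
      then show ?thesis by simp
    qed
    then have "DD t * q powr (1/3) > 0" using key by simp
    then show ?thesis using qp by (simp add: zero_less_mult_iff)
  qed
  show "DD t < 0" if "hh t < 0"
  proof -
    have "(2*w)^3 < (2*t-1)^3" using that hw by simp
    moreover have "(2*w)^3 > 0" using w0 by simp
    ultimately have "(2*t-1)^3 > 0" by linarith
    then have "2*t - 1 > 0" by (simp add: zero_less_power_eq)
    have "2*w < 2*t-1" by (rule power_less_imp_less_base[OF \<open>(2*w)^3 < _\<close>]) (use \<open>2*t-1>0\<close> in simp)
    then have "DD t * q powr (1/3) < 0" using key by simp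
    then show ?thesis using qp by (simp add: mult_less_0_iff)
  qed
qed


lemma hh_cont: "isCont hh x"
  unfolding hh_def by (intro continuous_intros)

definition rr :: real where
  "rr = (SOME r. 914741/1000000 \<le> r \<and> r \<le> 914742/1000000 \<and> hh r = 0)"

lemma rr_props: "914741/1000000 \<le> rr" "rr \<le> 914742/1000000" "hh rr = 0"
proof -
  have "\<exists>r. 914741/1000000 \<le> r \<and> r \<le> 914742/1000000 \<and> hh r = 0"
    by (rule IVT2) (auto simp: hh_def hh_cont power_divide)
  then have "914741/1000000 \<le> rr \<and> rr \<le> 914742/1000000 \<and> hh rr = 0"
    unfolding rr_def by (rule someI_ex)
  then show "914741/1000000 \<le> rr" "rr \<le> 914742/1000000" "hh rr = 0" by auto
qed

lemma hh_sign:
  shows "t < rr \<Longrightarrow> hh t > 0" and "rr < t \<Longrightarrow> hh t < 0"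
proof -
  define r where "r = rr"
  have r1: "r \<ge> 9/10" using rr_props(1) by (simp add: r_def)
  define Q where "Q = -16*(t^2+t*r+r^2) + 20*(t+r) - 6"
  have fac: "hh t = hh r + (t - r) * Q" unfolding hh_def Q_def
    by (simp add: algebra_simps power2_eq_square power3_eq_cube)
  have "r*(768*r-640) \<ge> (9/10)*(768*(9/10)-640)"
    by (rule mult_mono) (use r1 in auto)
  then have neg: "16+640*r-768*r^2 < 0" by (simp add: power2_eq_square algebra_simps)
  have "64*Q = (16+640*r-768*r^2) - (32*t-(20-16*r))^2" unfolding Q_def
    by (simp add: algebra_simps power2_eq_square)
  moreover have "(32*t-(20-16*r))^2 \<ge> 0" by simp
  ultimately have Q: "Q < 0" using neg by linarith
  have h0: "hh r = 0" using rr_props(3) by (simp add: r_def)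
  show "hh t > 0" if "t < rr" using fac h0 Q that by (simp add: r_def mult_neg_neg)
  show "hh t < 0" if "rr < t" using fac h0 Q that by (simp add: r_def mult_pos_neg)
qed

lemma gg_cont: "continuous_on {0..1} gg"
  unfolding gg_def[abs_def]
  by (intro continuous_intros continuous_on_powr') (auto simp: mult_nonneg_nonneg)

lemma gg_inc: assumes "1/2 \<le> a" "a < b" "b \<le> rr" shows "gg a < gg b"
proof (rule DERIV_pos_imp_increasing_open[OF assms(2)])
  fix x assume x: "a < x" "x < b"
  have "0 < x" "x < 1" using x assms rr_props(2) by auto
  moreover have "hh x > 0" using hh_sign(1) x assms by auto
  ultimately show "\<exists>y. DERIV gg x :> y \<and> y > 0" using gg_deriv DD_sign(1) by blast
next
  show "continuous_on {a..b} gg"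
    by (rule continuous_on_subset[OF gg_cont]) (use assms rr_props(2) in auto)
qed

lemma gg_dec: assumes "rr \<le> a" "a < b" "b \<le> 1" shows "gg a > gg b"
proof (rule DERIV_neg_imp_decreasing_open[OF assms(2)])
  fix x assume x: "a < x" "x < b"
  have "0 < x" "x < 1" using x assms rr_props(1) by auto
  moreover have "hh x < 0" using hh_sign(2) x assms by auto
  ultimately show "\<exists>y. DERIV gg x :> y \<and> y < 0" using gg_deriv DD_sign(2) by blast
next
  show "continuous_on {a..b} gg"
    by (rule continuous_on_subset[OF gg_cont]) (use assms rr_props(1) in auto)
qed

lemma gg_max: assumes "1/2 \<le> t" "t \<le> 1" "t \<noteq> rr" shows "gg t < gg rr"
proof (cases "t < rr")
  case True then show ?thesis using gg_inc assms by auto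
next
  case False then show ?thesis using gg_dec assms by auto
qed

lemma gg_max': assumes "1/2 \<le> t" "t \<le> 1" shows "gg t \<le> gg rr"
  using gg_max[OF assms] by (cases "t = rr") auto


lemma cbrt_lower: fixes L x :: real assumes "0 \<le> L" "L^3 \<le> x" shows "L \<le> x powr (1/3)"
proof -
  have x: "0 \<le> x" using assms by (meson order_trans zero_le_power)
  have c: "L^3 \<le> (x powr (1/3))^3" using assms x by (simp add: cube_powr)
  show ?thesis
  proof (rule ccontr)
    assume "\<not> ?thesis"
    then have "(x powr (1/3))^3 < L^3" by (intro power_strict_mono) auto
    then show False using c by simp
  qed
qed

lemma cbrt_upper: fixes U x :: real assumes "0 \<le> x" "x \<le> U^3" "0 \<le> U" shows "x powr (1/3) \<le> U"
proof -
  have c: "(x powr (1/3))^3 \<le> U^3" using assms by (simp add: cube_powr)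
  show ?thesis
  proof (rule ccontr)
    assume "\<not> ?thesis"
    then have "U^3 < (x powr (1/3))^3" using assms by (intro power_strict_mono) auto
    then show False using c by simp
  qed
qed

lemma p43: "0 \<le> (x::real) \<Longrightarrow> x powr (4/3) = x * x powr (1/3)"
proof (cases "x = 0")
  case False
  assume "0 \<le> x"
  have "x powr (4/3) = x powr (1 + 1/3)" by simp
  also have "\<dots> = x powr 1 * x powr (1/3)" by (rule powr_add)
  also have "\<dots> = x * x powr (1/3)" using \<open>0 \<le> x\<close> by simp
  finally show ?thesis .
qed simp

lemma p23: "0 \<le> (x::real) \<Longrightarrow> x powr (2/3) = (x powr (1/3))^2"
  by (cases "x = 0") (simp_all add: powr_power)

lemma gg_rr_bounds:
  "2*(914741/1000000)*(9707320/10000000) + 2*(4272459/10000000)^2 \<le> gg rr"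
  "gg rr \<le> 2*(914742/1000000)*(9707325/10000000) + 2*(4272475/10000000)^2"
proof -
  define r1 :: real where "r1 = 914741/1000000"
  define r2 :: real where "r2 = 914742/1000000"
  have r: "r1 \<le> rr" "rr \<le> r2" using rr_props by (auto simp: r1_def r2_def)
  have rpos: "0 < rr" using r by (simp add: r1_def)
  have qa: "rr*(1-rr) \<ge> r2*(1-r2)"
  proof -
    have "rr*(1-rr) - r2*(1-r2) = (r2-rr)*(rr+r2-1)" by (simp add: algebra_simps)
    moreover have "(r2-rr)*(rr+r2-1) \<ge> 0" using r by (intro mult_nonneg_nonneg) (auto simp: r1_def r2_def)
    ultimately show ?thesis by simp
  qed
  have qb: "rr*(1-rr) \<le> r1*(1-r1)"
  proof -
    have "r1*(1-r1) - rr*(1-rr) = (rr-r1)*(rr+r1-1)" by (simp add: algebra_simps)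
    moreover have "(rr-r1)*(rr+r1-1) \<ge> 0" using r by (intro mult_nonneg_nonneg) (auto simp: r1_def r2_def)
    ultimately show ?thesis by simp
  qed
  have q0: "0 \<le> r2*(1-r2)" by (simp add: r2_def)
  have A1: "9707320/10000000 \<le> r1 powr (1/3)" by (rule cbrt_lower) (simp_all add: r1_def power_divide)
  have A2: "r2 powr (1/3) \<le> 9707325/10000000" by (rule cbrt_upper) (simp_all add: r2_def power_divide)
  have A3: "4272459/10000000 \<le> (r2*(1-r2)) powr (1/3)" by (rule cbrt_lower) (simp_all add: r2_def power_divide)
  have A4: "(r1*(1-r1)) powr (1/3) \<le> 4272475/10000000" by (rule cbrt_upper) (simp_all add: r1_def power_divide)
  have m1: "r1 powr (1/3) \<le> rr powr (1/3)" using r by (intro powr_mono2) (auto simp: r1_def)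
  have m2: "rr powr (1/3) \<le> r2 powr (1/3)" using r rpos by (intro powr_mono2) auto
  have m3: "(r2*(1-r2)) powr (1/3) \<le> (rr*(1-rr)) powr (1/3)" using qa q0 by (intro powr_mono2) auto
  have m4: "(rr*(1-rr)) powr (1/3) \<le> (r1*(1-r1)) powr (1/3)" using qa q0 qb by (intro powr_mono2) auto
  have gg: "gg rr = 2*(rr * rr powr (1/3)) + 2*((rr*(1-rr)) powr (1/3))^2"
    unfolding gg_def using rpos qa q0 by (simp add: p43 p23)
  have "r1 * (9707320/10000000) \<le> rr * rr powr (1/3)"
    using A1 m1 r by (intro mult_mono) (auto simp: r1_def)
  moreover have "(4272459/10000000)^2 \<le> ((rr*(1-rr)) powr (1/3))^2"
    using A3 m3 by (intro power_mono) auto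
  ultimately show "2*(914741/1000000)*(9707320/10000000) + 2*(4272459/10000000)^2 \<le> gg rr"
    unfolding gg r1_def by linarith
  have "rr * rr powr (1/3) \<le> r2 * (9707325/10000000)"
    using A2 m2 r rpos by (intro mult_mono) auto
  moreover have "((rr*(1-rr)) powr (1/3))^2 \<le> (4272475/10000000)^2"
    using A4 m4 by (intro power_mono) auto
  ultimately show "gg rr \<le> 2*(914742/1000000)*(9707325/10000000) + 2*(4272475/10000000)^2"
    unfolding gg r2_def by linarith
qed

lemma p34_lower: fixes B g :: real assumes "0 < B" "B^4 < g^3" "0 \<le> g" shows "B < g powr (3/4)"
proof -
  have "(g powr (3/4))^4 = g^3"
    using assms by (cases "g = 0") (simp_all add: powr_power powr_realpow)
  then have "B^4 < (g powr (3/4))^4" using assms by simp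
  then show ?thesis by (rule power_less_imp_less_base) simp
qed

lemma p34_upper: fixes B g :: real assumes "0 < B" "g^3 < B^4" "0 \<le> g" shows "g powr (3/4) < B"
proof -
  have "(g powr (3/4))^4 = g^3"
    using assms by (cases "g = 0") (simp_all add: powr_power powr_realpow)
  then have "(g powr (3/4))^4 < B^4" using assms by simp
  then show ?thesis by (rule power_less_imp_less_base) (use assms in simp)
qed

lemma frr_bounds: "176995/100000 < gg rr powr (3/4)" "gg rr powr (3/4) < 177005/100000"
proof -
  define lo :: real where "lo = 2*(914741/1000000)*(9707320/10000000) + 2*(4272459/10000000)^2"
  define hi :: real where "hi = 2*(914742/1000000)*(9707325/10000000) + 2*(4272475/10000000)^2"
  have b: "lo \<le> gg rr" "gg rr \<le> hi" using gg_rr_bounds by (auto simp: lo_def hi_def)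
  have lo0: "0 \<le> lo" by (simp add: lo_def)
  have "(176995/100000::real)^4 < lo^3" by (simp add: lo_def power_divide)
  also have "lo^3 \<le> (gg rr)^3" using b lo0 by (intro power_mono) auto
  finally show "176995/100000 < gg rr powr (3/4)"
    by (rule p34_lower[rotated]) (use b lo0 in auto)
  have "(gg rr)^3 \<le> hi^3" using b lo0 by (intro power_mono) auto
  also have "hi^3 < (177005/100000::real)^4" by (simp add: hi_def power_divide)
  finally show "gg rr powr (3/4) < 177005/100000"
    by (rule p34_upper[rotated]) (use b lo0 in auto)
qed


lemma powr43_le: fixes x :: real assumes "0 \<le> x" "x \<le> 1" shows "x powr (4/3) \<le> x"
proof -
  have "x powr (1/3) \<le> 1" using assms by (intro powr_le1) auto
  then have "x * x powr (1/3) \<le> x * 1" using assms by (intro mult_left_mono) auto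
  then show ?thesis using assms by (simp add: p43)
qed

lemma sqrt_powr43: fixes q :: real assumes "0 \<le> q" shows "sqrt q powr (4/3) = q powr (2/3)"
proof -
  have "sqrt q powr (4/3) = (q powr (1/2)) powr (4/3)" using assms by (simp add: powr_half_sqrt)
  also have "\<dots> = q powr (2/3)" by (simp add: powr_powr)
  finally show ?thesis .
qed

lemma gg_sqrt: fixes t :: real assumes "0 \<le> t" "t \<le> 1"
  shows "gg t = 2 * t powr (4/3) + 2 * sqrt (t*(1-t)) powr (4/3)"
  using assms by (simp add: gg_def sqrt_powr43)

lemma G2: "2 \<le> gg rr"
proof -
  have "gg 1 \<le> gg rr" by (rule gg_max') auto
  then show ?thesis by (simp add: gg_def)
qed

lemma core0:
  fixes a b d :: real
  assumes H: "\<And>x y. \<bar>x\<bar> \<le> 1 \<Longrightarrow> \<bar>y\<bar> \<le> 1 \<Longrightarrow> \<bar>a*x^2+b*y^2+2*d*x*y\<bar> \<le> 1"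
    and a0: "0 \<le> a" and ba: "\<bar>b\<bar> \<le> a" and d0: "0 \<le> d"
  shows "\<bar>a\<bar> powr (4/3) + \<bar>b\<bar> powr (4/3) + 2 * \<bar>d\<bar> powr (4/3) \<le> gg rr"
proof -
  have a1: "a \<le> 1" using H[of 1 0] a0 by simp
  have G: "2 \<le> gg rr" by (rule G2)
  show ?thesis
  proof (cases "b \<ge> 0")
    case True
    have s: "a + b + 2*d \<le> 1" using H[of 1 1] by simp
    have "a powr (4/3) \<le> a" using a0 a1 by (rule powr43_le)
    moreover have "b powr (4/3) \<le> b" using True s a0 d0 by (intro powr43_le) auto
    moreover have "d powr (4/3) \<le> d" using True s a0 d0 by (intro powr43_le) auto
    ultimately show ?thesis using True a0 d0 s G by simp
  next
    case False
    define c where "c = -b"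
    have c0: "0 < c" and ca: "c \<le> a" using False ba by (auto simp: c_def)
    have bc: "b = -c" by (simp add: c_def)
    show ?thesis
    proof (cases "d \<le> c")
      case True
      have "\<bar>a*1^2+b*(d/c)^2+2*d*1*(d/c)\<bar> \<le> 1" using True d0 c0 by (intro H) auto
      then have "a - c*(d/c)^2 + 2*d*(d/c) \<le> 1" by (simp add: bc)
      moreover have "a - c*(d/c)^2 + 2*d*(d/c) = a + d^2/c" using c0 by (simp add: power2_eq_square field_simps)
      ultimately have "a + d^2/c \<le> 1" by simp
      then have "d^2/c \<le> 1 - a" by simp
      then have "d^2 \<le> c*(1-a)" using c0 by (simp add: divide_le_eq mult.commute)
      also have "\<dots> \<le> a*(1-a)" using ca a1 by (intro mult_right_mono) auto
      finally have "d^2 \<le> a*(1-a)" .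
      then have "sqrt (d^2) \<le> sqrt (a*(1-a))" by (rule real_sqrt_le_mono)
      then have ds: "d \<le> sqrt (a*(1-a))" using d0 by simp
      have e1: "c powr (4/3) \<le> a powr (4/3)" using ca c0 by (intro powr_mono2) auto
      have e2: "d powr (4/3) \<le> sqrt (a*(1-a)) powr (4/3)" using ds d0 by (intro powr_mono2) auto
      have S: "\<bar>a\<bar> powr (4/3) + \<bar>b\<bar> powr (4/3) + 2 * \<bar>d\<bar> powr (4/3)
          \<le> 2 * a powr (4/3) + 2 * sqrt (a*(1-a)) powr (4/3)"
        using e1 e2 a0 d0 c0 by (simp add: bc)
      show ?thesis
      proof (cases "a \<ge> 1/2")
        case True
        then have "2 * a powr (4/3) + 2 * sqrt (a*(1-a)) powr (4/3) = gg a"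
          using a1 by (simp add: gg_sqrt)
        also have "\<dots> \<le> gg rr" using True a1 by (intro gg_max') auto
        finally show ?thesis using S by simp
      next
        case False
        have "a powr (4/3) \<le> a" using a0 a1 by (rule powr43_le)
        have q: "a*(1-a) \<le> 1/4"
        proof -
          have "1/4 - a*(1-a) = (a - 1/2)^2" by (simp add: power2_eq_square algebra_simps)
          then show ?thesis by (metis diff_ge_0_iff_ge zero_le_power2)
        qed
        have "sqrt (a*(1-a)) \<le> sqrt (1/4)" using q by (rule real_sqrt_le_mono)
        also have "sqrt (1/4) = (1/2::real)" by (simp add: real_sqrt_divide)
        finally have sq: "sqrt (a*(1-a)) \<le> 1/2" .
        have "sqrt (a*(1-a)) powr (4/3) \<le> sqrt (a*(1-a))"
          by (rule powr43_le) (use sq q a0 a1 in auto)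
        then show ?thesis using S sq False \<open>a powr (4/3) \<le> a\<close> G by linarith
      qed
    next
      case False
      have s: "a - c + 2*d \<le> 1" using H[of 1 1] by (simp add: bc)
      have d1: "d \<le> 1/2" using s ca by simp
      have c1: "c \<le> 1/2" using s ca False by simp
      have "a powr (4/3) \<le> a" using a0 a1 by (rule powr43_le)
      moreover have "c powr (4/3) \<le> c" using c0 c1 by (intro powr43_le) auto
      moreover have "d powr (4/3) \<le> d" using d0 d1 by (intro powr43_le) auto
      ultimately show ?thesis using a0 d0 c0 s c1 G by (simp add: bc)
    qed
  qed
qed

lemma core1:
  fixes a b d :: real
  assumes H: "\<And>x y. \<bar>x\<bar> \<le> 1 \<Longrightarrow> \<bar>y\<bar> \<le> 1 \<Longrightarrow> \<bar>a*x^2+b*y^2+2*d*x*y\<bar> \<le> 1"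
    and ba: "\<bar>b\<bar> \<le> \<bar>a\<bar>"
  shows "\<bar>a\<bar> powr (4/3) + \<bar>b\<bar> powr (4/3) + 2 * \<bar>d\<bar> powr (4/3) \<le> gg rr"
proof -
  have Hn: "\<bar>a*x^2+b*y^2+2*(-d)*x*y\<bar> \<le> 1" if "\<bar>x\<bar> \<le> 1" "\<bar>y\<bar> \<le> 1" for x y
    using H[of x "-y"] that by simp
  have Hm: "\<bar>(-a)*x^2+(-b)*y^2+2*(-d)*x*y\<bar> \<le> 1" if "\<bar>x\<bar> \<le> 1" "\<bar>y\<bar> \<le> 1" for x y
  proof -
    have "\<bar>(-a)*x^2+(-b)*y^2+2*(-d)*x*y\<bar> = \<bar>a*x^2+b*y^2+2*d*x*y\<bar>" by (simp add: algebra_simps abs_minus_commute)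
    then show ?thesis using H that by simp
  qed
  have Hmn: "\<bar>(-a)*x^2+(-b)*y^2+2*d*x*y\<bar> \<le> 1" if "\<bar>x\<bar> \<le> 1" "\<bar>y\<bar> \<le> 1" for x y
    using Hm[of x "-y"] that by simp
  consider "a \<ge> 0" "d \<ge> 0" | "a \<ge> 0" "d < 0" | "a < 0" "d \<le> 0" | "a < 0" "d > 0" by linarith
  then show ?thesis
  proof cases
    case 1 then show ?thesis using core0[OF H] ba by auto
  next
    case 2 then show ?thesis using core0[OF Hn] ba by auto
  next
    case 3 then show ?thesis using core0[OF Hm] ba by auto
  next
    case 4 then show ?thesis using core0[OF Hmn] ba by auto
  qed
qed

lemma core:
  fixes a b d :: real
  assumes H: "\<And>x y. \<bar>x\<bar> \<le> 1 \<Longrightarrow> \<bar>y\<bar> \<le> 1 \<Longrightarrow> \<bar>a*x^2+b*y^2+2*d*x*y\<bar> \<le> 1"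
  shows "\<bar>a\<bar> powr (4/3) + \<bar>b\<bar> powr (4/3) + 2 * \<bar>d\<bar> powr (4/3) \<le> gg rr"
proof (cases "\<bar>b\<bar> \<le> \<bar>a\<bar>")
  case True then show ?thesis using core1[OF H] by blast
next
  case False
  have Hs: "\<bar>b*x^2+a*y^2+2*d*x*y\<bar> \<le> 1" if "\<bar>x\<bar> \<le> 1" "\<bar>y\<bar> \<le> 1" for x y
  proof -
    have "\<bar>b*x^2+a*y^2+2*d*x*y\<bar> = \<bar>a*y^2+b*x^2+2*d*y*x\<bar>" by (simp add: algebra_simps)
    then show ?thesis using H that by simp
  qed
  have "\<bar>b\<bar> powr (4/3) + \<bar>a\<bar> powr (4/3) + 2 * \<bar>d\<bar> powr (4/3) \<le> gg rr"
    using core1[OF Hs] False by simp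
  then show ?thesis by simp
qed


lemma hom2_form:
  assumes "hom2_poly 2 P"
  shows "\<exists>a b d. \<forall>x. P x = a*(x 0)^2 + b*(x 1)^2 + 2*d*(x 0)*(x 1)"
proof -
  obtain c where c: "\<forall>x. P x = (\<Sum>i<2. \<Sum>j<2. c i j * x i * x j)"
    using assms unfolding hom2_poly_def by blast
  have "\<forall>x. P x = c 0 0*(x 0)^2 + c 1 1*(x 1)^2 + 2*((c 0 1 + c 1 0)/2)*(x 0)*(x 1)"
    using c by (simp add: numeral_2_eq_2 power2_eq_square algebra_simps)
  then show ?thesis by blast
qed

lemma phi2_form:
  assumes P: "\<And>x. P x = a*(x 0)^2 + b*(x 1)^2 + 2*d*(x 0)*(x 1)"
  shows "Phi2 2 P = (\<bar>a\<bar> powr (4/3) + 2 * \<bar>d\<bar> powr (4/3) + \<bar>b\<bar> powr (4/3)) powr (3/4)"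
proof -
  have p00: "polar2 P (unitv 0) (unitv 0) = a" unfolding polar2_def unitv_def P by simp
  have p01: "polar2 P (unitv 0) (unitv (Suc 0)) = d" unfolding polar2_def unitv_def P by simp
  have p10: "polar2 P (unitv (Suc 0)) (unitv 0) = d" unfolding polar2_def unitv_def P by simp
  have p11: "polar2 P (unitv (Suc 0)) (unitv (Suc 0)) = b" unfolding polar2_def unitv_def P by simp
  show ?thesis unfolding Phi2_def by (simp add: numeral_2_eq_2 p00 p01 p10 p11 algebra_simps)
qed

lemma quad_bound:
  fixes a b d x y :: real
  assumes "\<bar>x\<bar> \<le> 1" "\<bar>y\<bar> \<le> 1"
  shows "\<bar>a*x^2+b*y^2+2*d*x*y\<bar> \<le> \<bar>a\<bar>+\<bar>b\<bar>+2*\<bar>d\<bar>"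
proof -
  have x2: "\<bar>x^2\<bar> \<le> 1" using assms by (simp add: abs_square_le_1)
  have y2: "\<bar>y^2\<bar> \<le> 1" using assms by (simp add: abs_square_le_1)
  have xy: "\<bar>x*y\<bar> \<le> 1" using assms by (simp add: abs_mult mult_le_one)
  have "\<bar>a*x^2+b*y^2+2*d*x*y\<bar> \<le> \<bar>a*x^2\<bar>+\<bar>b*y^2\<bar>+\<bar>2*d*(x*y)\<bar>"
  proof -
    have "\<bar>a*x^2+b*y^2+2*d*x*y\<bar> \<le> \<bar>a*x^2+b*y^2\<bar> + \<bar>2*d*x*y\<bar>" by (rule abs_triangle_ineq)
    moreover have "\<bar>a*x^2+b*y^2\<bar> \<le> \<bar>a*x^2\<bar> + \<bar>b*y^2\<bar>" by (rule abs_triangle_ineq)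
    moreover have "2*d*x*y = 2*d*(x*y)" by simp
    ultimately show ?thesis by linarith
  qed
  also have "\<dots> \<le> \<bar>a\<bar>+\<bar>b\<bar>+2*\<bar>d\<bar>"
  proof -
    have "\<bar>a*x^2\<bar> \<le> \<bar>a\<bar>" using x2 by (simp add: abs_mult mult_left_le)
    moreover have "\<bar>b*y^2\<bar> \<le> \<bar>b\<bar>" using y2 by (simp add: abs_mult mult_left_le)
    moreover have "\<bar>2*d*(x*y)\<bar> \<le> 2*\<bar>d\<bar>" using xy by (simp add: abs_mult mult_left_le)
    ultimately show ?thesis by linarith
  qed
  finally show ?thesis .
qed

lemma norm_le1_D:
  assumes P: "\<And>x. P x = a*(x 0)^2 + b*(x 1)^2 + 2*d*(x 0)*(x 1)"
    and N: "poly_norm 2 P \<le> 1" and xy: "\<bar>x\<bar> \<le> 1" "\<bar>y\<bar> \<le> 1"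
  shows "\<bar>a*x^2+b*y^2+2*d*x*y\<bar> \<le> 1"
proof -
  define S where "S = {\<bar>P z\<bar> | z. \<forall>i<2. \<bar>z i\<bar> \<le> 1}"
  have bdd: "bdd_above S"
  proof (rule bdd_aboveI)
    fix s assume "s \<in> S"
    then obtain z where z: "s = \<bar>P z\<bar>" "\<forall>i<2. \<bar>z i\<bar> \<le> 1" unfolding S_def by blast
    show "s \<le> \<bar>a\<bar>+\<bar>b\<bar>+2*\<bar>d\<bar>" unfolding z P using z(2) by (intro quad_bound) auto
  qed
  define z where "z = (\<lambda>i::nat. if i = 0 then x else y)"
  have "\<bar>P z\<bar> \<in> S" unfolding S_def z_def using xy by auto
  then have "\<bar>P z\<bar> \<le> Sup S" using bdd by (rule cSup_upper)
  also have "Sup S = poly_norm 2 P" unfolding S_def poly_norm_def by simp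
  finally show ?thesis using N by (simp add: P z_def)
qed

lemma norm_le1_I:
  assumes P: "\<And>x. P x = a*(x 0)^2 + b*(x 1)^2 + 2*d*(x 0)*(x 1)"
    and H: "\<And>x y. \<bar>x\<bar> \<le> 1 \<Longrightarrow> \<bar>y\<bar> \<le> 1 \<Longrightarrow> \<bar>a*x^2+b*y^2+2*d*x*y\<bar> \<le> 1"
  shows "poly_norm 2 P \<le> 1"
  unfolding poly_norm_def
proof (rule cSup_least)
  show "{\<bar>P x\<bar> |x. \<forall>i<2. \<bar>x i\<bar> \<le> 1} \<noteq> {}" by (rule ccontr) (auto dest: spec[of _ "\<lambda>_. 0"])
  fix s assume "s \<in> {\<bar>P x\<bar> |x. \<forall>i<2. \<bar>x i\<bar> \<le> 1}"
  then obtain z where z: "s = \<bar>P z\<bar>" "\<forall>i<2. \<bar>z i\<bar> \<le> 1" by blast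
  show "s \<le> 1" unfolding z P using z(2) by (intro H) auto
qed

lemma extremal_poly:
  fixes t :: real
  assumes "1/2 \<le> t" "t \<le> 1" "\<bar>x\<bar> \<le> 1" "\<bar>y\<bar> \<le> 1"
  shows "\<bar>t*x^2 + (-t)*y^2 + 2* sqrt (t*(1-t))*x*y\<bar> \<le> 1"
proof -
  define sv where "sv = sqrt (t*(1-t))"
  have s2: "sv^2 = t*(1-t)" unfolding sv_def using assms by simp
  have t0: "t > 0" using assms by simp
  define Q where "Q = t*x^2 + (-t)*y^2 + 2 * sv*x*y"
  have "(sv*x - t*y)^2 = t*(x^2 - Q) + x^2*(sv^2 - t*(1-t))" unfolding Q_def by algebra
  then have e1: "t*(x^2 - Q) = (sv*x - t*y)^2" using s2 by simp
  have "(t*x + sv*y)^2 = t*(Q + y^2) + y^2*(sv^2 - t*(1-t))" unfolding Q_def by algebra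
  then have e2: "t*(Q + y^2) = (t*x + sv*y)^2" using s2 by simp
  have "t*(x^2 - Q) \<ge> 0" using e1 by simp
  then have "x^2 - Q \<ge> 0" using t0 by (simp add: zero_le_mult_iff)
  moreover have "t*(Q + y^2) \<ge> 0" using e2 by simp
  then have "Q + y^2 \<ge> 0" using t0 by (simp add: zero_le_mult_iff)
  moreover have "x^2 \<le> 1" "y^2 \<le> 1" using assms by (simp_all add: abs_square_le_1)
  ultimately have "\<bar>Q\<bar> \<le> 1" by linarith
  then show ?thesis by (simp add: Q_def sv_def)
qed


theorem mainTheorem2:
  defines "f \<equiv> \<lambda>t::real. (2 * t powr (4/3) + 2 * (sqrt (t * (1 - t))) powr (4/3)) powr (3/4)"
  shows "L2_linf 2 = Sup (f ` {1/2..1})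
    \<and> \<bar>Sup (f ` {1/2..1}) - 1.7700\<bar> < 0.00005
    \<and> (\<exists>t0\<in>{1/2..1}. f t0 = Sup (f ` {1/2..1}) \<and> \<bar>t0 - 0.9147\<bar> < 0.00005)"
proof -
  have fgg: "f t = gg t powr (3/4)" if "0 \<le> t" "t \<le> 1" for t
    using that by (simp add: f_def gg_sqrt)
  have gg0: "0 \<le> gg t" for t by (simp add: gg_def)
  have rI: "rr \<in> {1/2..1}" using rr_props by auto
  have fle: "f t \<le> f rr" if "t \<in> {1/2..1}" for t
  proof -
    have "gg t powr (3/4) \<le> gg rr powr (3/4)" using gg_max'[of t] that gg0 by (intro powr_mono2) auto
    then show ?thesis using fgg that rI by auto
  qed
  have supf: "Sup (f ` {1/2..1}) = f rr"
    by (rule cSup_eq_maximum) (use rI fle in auto)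
  have frr: "f rr = gg rr powr (3/4)" using fgg rI by auto
  have L: "L2_linf 2 = f rr"
    unfolding L2_linf_def
  proof (rule cSup_eq_maximum)
    define w where "w = sqrt (rr*(1-rr))"
    define P where "P = (\<lambda>x::nat\<Rightarrow>real. rr*(x 0)^2 + (-rr)*(x 1)^2 + 2 * w*(x 0)*(x 1))"
    have hom: "hom2_poly 2 P"
      unfolding hom2_poly_def
    proof (intro exI allI)
      fix x :: "nat \<Rightarrow> real"
      show "P x = (\<Sum>i<2. \<Sum>j<2. (\<lambda>i j. if i = 0 \<and> j = 0 then rr else if i = 1 \<and> j = 1 then -rr
               else if i = 0 \<and> j = 1 then 2 * w else 0) i j * x i * x j)"
        by (simp add: P_def numeral_2_eq_2 power2_eq_square algebra_simps)
    qed
    have Pf: "\<And>x. P x = rr*(x 0)^2 + (-rr)*(x 1)^2 + 2 * w*(x 0)*(x 1)" by (simp add: P_def)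
    have nrm: "poly_norm 2 P \<le> 1"
      by (rule norm_le1_I[OF Pf]) (use rI extremal_poly[of rr] in \<open>auto simp: w_def\<close>)
    have "Phi2 2 P = (\<bar>rr\<bar> powr (4/3) + 2 * \<bar>w\<bar> powr (4/3) + \<bar>-rr\<bar> powr (4/3)) powr (3/4)"
      by (rule phi2_form[OF Pf])
    also have "\<dots> = f rr" using rI by (simp add: f_def w_def)
    finally have "Phi2 2 P = f rr" .
    then show "f rr \<in> {Phi2 2 P |P. hom2_poly 2 P \<and> poly_norm 2 P \<le> 1}"
      unfolding mem_Collect_eq using hom nrm by (intro exI[of _ P]) simp
  next
    fix z assume "z \<in> {Phi2 2 P |P. hom2_poly 2 P \<and> poly_norm 2 P \<le> 1}"
    then obtain P where z: "z = Phi2 2 P" and hp: "hom2_poly 2 P" and np: "poly_norm 2 P \<le> 1" by blast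
    obtain a b d where Pf: "\<And>x. P x = a*(x 0)^2 + b*(x 1)^2 + 2*d*(x 0)*(x 1)"
      using hom2_form[OF hp] by blast
    have "\<bar>a\<bar> powr (4/3) + \<bar>b\<bar> powr (4/3) + 2 * \<bar>d\<bar> powr (4/3) \<le> gg rr"
      by (rule core) (rule norm_le1_D[OF Pf np])
    then have "(\<bar>a\<bar> powr (4/3) + 2 * \<bar>d\<bar> powr (4/3) + \<bar>b\<bar> powr (4/3)) powr (3/4) \<le> gg rr powr (3/4)"
      by (intro powr_mono2) auto
    then show "z \<le> f rr" using z phi2_form[OF Pf] frr by simp
  qed
  have b: "176995/100000 < f rr" "f rr < 177005/100000" using frr_bounds frr by auto
  have r: "914741/1000000 \<le> rr" "rr \<le> 914742/1000000" using rr_props by auto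
  show ?thesis
  proof (intro conjI)
    show "L2_linf 2 = Sup (f ` {1/2..1})" using L supf by simp
    show "\<bar>Sup (f ` {1/2..1}) - 1.7700\<bar> < 0.00005" unfolding supf abs_less_iff using b by simp
    show "\<exists>t0\<in>{1/2..1}. f t0 = Sup (f ` {1/2..1}) \<and> \<bar>t0 - 0.9147\<bar> < 0.00005"
      using rI supf r by (intro bexI[of _ rr]) auto
  qed
qed

end
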